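(* Consider the discrete-time linear system $x_{t+1}=Ax_t+Bu_t+v_t$ with $x_t\in\mathbb{R}^n$, $u_t\in\mathbb{R}^p$, where the disturbances $v_t\in\mathbb{R}^n$ are i.i.d. samples from a distribution $\mathcal{D}$ (of arbitrary form, with bounded moments). Let $Q,R$ be positive definite matrices, $\gamma\in(0,1)$, and let $K\in\mathbb{R}^{p\times n}$ be a feedback gain such that $A_K:=A+BK$ is stable. Set $Q_K:=Q+K^{\rm T}RK$ and let $P$ be the solution of the Lyapunov equation $P=Q+K^{\rm T}RK+\gamma A_K^{\rm T}PA_K$. For $x\in\mathbb{R}^n$ define the random variable $$G^{K}(x)=x^{\rm T}Px+2\sum_{k=0}^{\infty}\gamma^{k+1}w_k^{\rm T}PA_K^{k+1}x+\sum_{k=0}^{\infty}\gamma^{k+1}w_k^{\rm T}Pw_k+2\sum_{k=1}^{\infty}\gamma^{k+1}w_k^{\rm T}P\sum_{\tau=0}^{k-1}A_K^{k-\tau}w_\tau,$$ where $w_k\sim\mathcal{D}$, $k\in\mathbb{N}$, are mutually independent. Then $G^K(x)$ is a fixed-point solution of the random variable Bellman equation $$G^{K}(x)\overset{D}{=}x^{\rm T}Q_Kx+\gamma G^{K}(x'),\qquad x'=A_Kx+v_0,$$ where $v_0\sim\mathcal{D}$ is independent of the $w_k$'s and $\overset{D}{=}$ denotes equality in distribution.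
   Context: The random return of the static linear policy $u_t=Kx_t$ from $x_0=x$ is $\sum_{t=0}^\infty\gamma^t x_t^{\rm T}(Q+K^{\rm T}RK)x_t$; the theorem gives an explicit random variable satisfying its distributional Bellman equation. In $G^K(x')$ the state $x'$ is random and independent of the fresh copies $w_k$ used in the definition of $G^K$. *)

theory Defs
  imports "HOL-Analysis.Analysis" "HOL-Probability.Probability"
begin

text \<open>Matrix power (matrix product iterated; the componentwise monoid structure on vec is NOT used).\<close>
fun matpow :: "real^'n^'n \<Rightarrow> nat \<Rightarrow> real^'n^'n" where
  "matpow M 0 = mat 1"
| "matpow M (Suc k) = M ** matpow M k"

text \<open>Positive definite: symmetric with positive quadratic form on nonzero vectors.\<close>
definition pos_def :: "real^'n^'n \<Rightarrow> bool" where
  "pos_def M \<longleftrightarrow> transpose M = M \<and> (\<forall>x. x \<noteq> 0 \<longrightarrow> x \<bullet> (M *v x) > 0)"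

text \<open>(Schur) stability of a real square matrix: every (complex) eigenvalue has modulus < 1.\<close>
definition stable :: "real^'n^'n \<Rightarrow> bool" where
  "stable M \<longleftrightarrow> (\<forall>(l::complex) (v::complex^'n). v \<noteq> 0 \<longrightarrow>
       (\<chi> i j. complex_of_real (M $ i $ j)) *v v = l *s v \<longrightarrow> cmod l < 1)"

text \<open>The random return G^K(x), as a function of the i.i.d. sequence w = (w_0, w_1, ...).
  P is the Lyapunov solution, AK = A + B K.  The last sum runs over k >= 1 (reindexed k = j+1).\<close>
definition GK :: "real^'n^'n \<Rightarrow> real^'n^'n \<Rightarrow> real \<Rightarrow> real^'n \<Rightarrow> (nat \<Rightarrow> real^'n) \<Rightarrow> real" where
  "GK P AK \<gamma> x w =
     x \<bullet> (P *v x)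
   + 2 * (\<Sum>k. \<gamma>^(k+1) * (w k \<bullet> (P *v (matpow AK (k+1) *v x))))
   + (\<Sum>k. \<gamma>^(k+1) * (w k \<bullet> (P *v w k)))
   + 2 * (\<Sum>j. \<gamma>^((j+1)+1) * (w (j+1) \<bullet> (P *v (\<Sum>\<tau><j+1. matpow AK ((j+1) - \<tau>) *v w \<tau>))))"

end

theory Submission
  imports Defs "Jordan_Normal_Form.Spectral_Radius"
begin

no_notation Matrix.vec_index (infixl "$" 100)
no_notation Matrix.scalar_prod (infix "\<bullet>" 70)

lemma matpow_Suc': "matpow X (Suc k) = matpow X k ** X"
  by (induction k) (simp_all add: matrix_mul_assoc)

lemma stable_pow_bounded:
  fixes M :: "real^'n^'n" assumes stab: "stable M"
  shows "\<exists>c. \<forall>k i j. \<bar>matpow M k $ i $ j\<bar> \<le> c"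
proof -
  define n where "n = CARD('n)"
  obtain h where h: "bij_betw h {0..<n} (UNIV::'n set)"
    using ex_bij_betw_nat_finite[of "UNIV::'n set"] unfolding n_def by auto
  define g where "g = the_inv_into {0..<n} h"
  have g: "bij_betw g (UNIV::'n set) {0..<n}" unfolding g_def by (rule bij_betw_the_inv_into[OF h])
  have hg: "h (g a) = a" for a unfolding g_def using h
    by (metis UNIV_I bij_betw_def f_the_inv_into_f)
  have gh: "i < n \<Longrightarrow> g (h i) = i" for i unfolding g_def using h
    by (simp add: bij_betw_def the_inv_into_f_f)
  have gn: "g a < n" for a using g by (auto simp: bij_betw_def)
  define toJ :: "real^'n^'n \<Rightarrow> complex mat" where
    "toJ X = Matrix.mat n n (\<lambda>(i,j). complex_of_real (X $ h i $ h j))" for X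
  have carr: "toJ X \<in> carrier_mat n n" for X unfolding toJ_def by simp
  have dims[simp]: "dim_row (toJ X) = n" "dim_col (toJ X) = n" for X unfolding toJ_def by simp_all
  have sum_reind: "(\<Sum>k\<in>{0..<n}. f (h k)) = (\<Sum>b\<in>UNIV. f b)" for f :: "'n \<Rightarrow> complex"
    using sum.reindex_bij_betw[OF h, of f] .
  have mult: "toJ (X ** Y) = toJ X * toJ Y" for X Y
  proof (rule eq_matI)
    fix i j assume ij: "i < dim_row (toJ X * toJ Y)" "j < dim_col (toJ X * toJ Y)"
    then have i: "i < n" and j: "j < n" by auto
    have "(toJ X * toJ Y) $$ (i,j) = (\<Sum>k\<in>{0..<n}. complex_of_real (X $ h i $ h k) * complex_of_real (Y $ h k $ h j))"
      using i j carr by (simp add: scalar_prod_def toJ_def)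
    also have "\<dots> = (\<Sum>b\<in>UNIV. complex_of_real (X $ h i $ b) * complex_of_real (Y $ b $ h j))"
      by (rule sum_reind)
    also have "\<dots> = toJ (X ** Y) $$ (i,j)"
      using i j by (simp add: toJ_def matrix_matrix_mult_def)
    finally show "toJ (X ** Y) $$ (i,j) = (toJ X * toJ Y) $$ (i,j)" by simp
  qed (use carr in auto)
  have one: "toJ (Finite_Cartesian_Product.mat 1) = 1\<^sub>m n"
  proof (rule eq_matI)
    fix i j assume "i < dim_row (1\<^sub>m n :: complex mat)" "j < dim_col (1\<^sub>m n :: complex mat)"
    then have i: "i < n" and j: "j < n" by auto
    have "(h i = h j) = (i = j)" using gh i j by metis
    then show "toJ (Finite_Cartesian_Product.mat 1) $$ (i,j) = 1\<^sub>m n $$ (i,j)"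
      using i j by (simp add: toJ_def Finite_Cartesian_Product.mat_def)
  qed (use carr in auto)
  have pow: "toJ (matpow X k) = toJ X ^\<^sub>m k" for X k
  proof (induction k)
    case 0 then show ?case using one carr by simp
  next
    case (Suc k) then show ?case by (simp only: matpow_Suc' mult pow_mat.simps)
  qed
  have n0: "n > 0" unfolding n_def by simp
  obtain ev where ev: "ev \<in> spectrum (toJ M)" and sr: "spectral_radius (toJ M) = norm ev"
    using spectral_radius_mem_max(1)[OF carr n0] by auto
  obtain v where v: "v \<in> carrier_vec n" "v \<noteq> 0\<^sub>v n" "toJ M *\<^sub>v v = ev \<cdot>\<^sub>v v"
    using ev carr unfolding spectrum_def eigenvalue_def eigenvector_def by auto
  define u :: "complex^'n" where "u = (\<chi> a. Matrix.vec_index v (g a))"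
  have "u \<noteq> 0"
  proof
    assume u0: "u = 0"
    have "v = 0\<^sub>v n"
    proof (rule eq_vecI)
      fix i assume "i < dim_vec (0\<^sub>v n :: complex vec)"
      then have i: "i < n" by simp
      have "Matrix.vec_index v i = u $ h i" unfolding u_def using gh[OF i] by simp
      then show "Matrix.vec_index v i = Matrix.vec_index (0\<^sub>v n) i" using u0 i by simp
    qed (use v in simp)
    with v show False by simp
  qed
  moreover have "(\<chi> i j. complex_of_real (M $ i $ j)) *v u = ev *s u"
  proof (rule Finite_Cartesian_Product.vec_eq_iff[THEN iffD2], rule allI)
    fix a
    have "Matrix.vec_index (toJ M *\<^sub>v v) (g a) = Matrix.vec_index (ev \<cdot>\<^sub>v v) (g a)" using v by simp
    moreover have "Matrix.vec_index (toJ M *\<^sub>v v) (g a) =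
        (\<Sum>k\<in>{0..<n}. complex_of_real (M $ a $ h k) * Matrix.vec_index v (g (h k)))"
      using gn[of a] carr v(1) hg gh
      by (auto simp: toJ_def scalar_prod_def intro!: sum.cong)
    moreover have "(\<Sum>k\<in>{0..<n}. complex_of_real (M $ a $ h k) * Matrix.vec_index v (g (h k)))
        = (\<Sum>b\<in>UNIV. complex_of_real (M $ a $ b) * Matrix.vec_index v (g b))"
      by (rule sum_reind)
    ultimately show "((\<chi> i j. complex_of_real (M $ i $ j)) *v u) $ a = (ev *s u) $ a"
      using gn[of a] v(1) by (simp add: matrix_vector_mult_def u_def)
  qed
  ultimately have "cmod ev < 1" using stab unfolding stable_def by blast
  then have "spectral_radius (toJ M) < 1" using sr by simp
  then obtain c where c: "\<And>k. norm_bound (toJ M ^\<^sub>m k) c"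
    using spectral_radius_jnf_norm_bound_less_1_upper_triangular[OF carr] by blast
  have "\<bar>matpow M k $ a $ b\<bar> \<le> c" for k a b
  proof -
    have "norm ((toJ M ^\<^sub>m k) $$ (g a, g b)) \<le> c"
      using c[of k] gn carr unfolding norm_bound_def by auto
    also have "(toJ M ^\<^sub>m k) $$ (g a, g b) = toJ (matpow M k) $$ (g a, g b)"
      by (simp only: pow)
    also have "\<dots> = complex_of_real (matpow M k $ a $ b)"
      using gn hg by (simp add: toJ_def)
    finally show ?thesis by simp
  qed
  then show ?thesis by blast
qed




lemma GK_shift:
  fixes AK P QK :: "real^'n^'n" and \<gamma> :: real and x v :: "real^'n" and w :: "nat \<Rightarrow> real^'n"
  defines "w' \<equiv> case_nat v w"
  defines "x' \<equiv> AK *v x + v"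
  assumes symP: "\<And>y z. y \<bullet> (P *v z) = z \<bullet> (P *v y)"
    and lyapB: "\<And>y. y \<bullet> (P *v y) = y \<bullet> (QK *v y) + \<gamma> * ((AK *v y) \<bullet> (P *v (AK *v y)))"
    and s2a: "summable (\<lambda>k. \<gamma>^(k+1) * (w' k \<bullet> (P *v (matpow AK (k+1) *v x))))"
    and s3a: "summable (\<lambda>k. \<gamma>^(k+1) * (w' k \<bullet> (P *v w' k)))"
    and s4a: "summable (\<lambda>j. \<gamma>^((j+1)+1) * (w' (j+1) \<bullet> (P *v (\<Sum>\<tau><j+1. matpow AK ((j+1) - \<tau>) *v w' \<tau>))))"
    and s2b: "summable (\<lambda>k. \<gamma>^(k+1) * (w k \<bullet> (P *v (matpow AK (k+1) *v x'))))"
    and s3b: "summable (\<lambda>k. \<gamma>^(k+1) * (w k \<bullet> (P *v w k)))"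
    and s4b: "summable (\<lambda>j. \<gamma>^((j+1)+1) * (w (j+1) \<bullet> (P *v (\<Sum>\<tau><j+1. matpow AK ((j+1) - \<tau>) *v w \<tau>))))"
  shows "GK P AK \<gamma> x w' = x \<bullet> (QK *v x) + \<gamma> * GK P AK \<gamma> x' w"
proof -
  define t2a where "t2a = (\<lambda>k. \<gamma>^(k+1) * (w' k \<bullet> (P *v (matpow AK (k+1) *v x))))"
  define t3a where "t3a = (\<lambda>k. \<gamma>^(k+1) * (w' k \<bullet> (P *v w' k)))"
  define t4a where "t4a = (\<lambda>j. \<gamma>^((j+1)+1) * (w' (j+1) \<bullet> (P *v (\<Sum>\<tau><j+1. matpow AK ((j+1) - \<tau>) *v w' \<tau>))))"
  define t2b where "t2b = (\<lambda>k. \<gamma>^(k+1) * (w k \<bullet> (P *v (matpow AK (k+1) *v x'))))"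
  define t3b where "t3b = (\<lambda>k. \<gamma>^(k+1) * (w k \<bullet> (P *v w k)))"
  define t4b where "t4b = (\<lambda>j. \<gamma>^((j+1)+1) * (w (j+1) \<bullet> (P *v (\<Sum>\<tau><j+1. matpow AK ((j+1) - \<tau>) *v w \<tau>))))"
  define a where "a = (\<lambda>k. \<gamma>^(k+2) * (w k \<bullet> (P *v (matpow AK (k+2) *v x))))"
  define b where "b = (\<lambda>k. \<gamma>^(k+2) * (w k \<bullet> (P *v (matpow AK (k+1) *v v))))"
  define e where "e = (\<lambda>j. \<gamma>^(j+2) * (w j \<bullet> (P *v (\<Sum>\<tau><j. matpow AK (j - \<tau>) *v w \<tau>))))"
  note s = s2a[folded t2a_def] s3a[folded t3a_def] s4a[folded t4a_def]
    s2b[folded t2b_def] s3b[folded t3b_def] s4b[folded t4b_def]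
  have M1: "matpow AK 1 = AK" by (simp add: matrix_mul_rid)
  have Mshift: "matpow AK (Suc k) *v (AK *v y) = matpow AK (Suc (Suc k)) *v y" for k y
    by (simp only: matpow_Suc'[of AK "Suc k"] matrix_vector_mul_assoc)
  have GKa: "GK P AK \<gamma> x w' = x \<bullet> (P *v x) + 2 * suminf t2a + suminf t3a + 2 * suminf t4a"
    unfolding GK_def t2a_def t3a_def t4a_def ..
  have GKb: "GK P AK \<gamma> x' w = x' \<bullet> (P *v x') + 2 * suminf t2b + suminf t3b + 2 * suminf t4b"
    unfolding GK_def t2b_def t3b_def t4b_def ..
  \<comment> \<open>(1)\<close>
  have a_eq: "(\<lambda>k. t2a (Suc k)) = a"
    by (rule ext) (simp add: t2a_def a_def w'_def)
  have t2a0: "t2a 0 = \<gamma> * (v \<bullet> (P *v (AK *v x)))"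
    by (simp add: t2a_def w'_def M1)
  have sa: "summable a" using s(1) a_eq summable_Suc_iff by metis
  have S2: "suminf t2a = \<gamma> * (v \<bullet> (P *v (AK *v x))) + suminf a"
    using suminf_split_head[OF s(1)] a_eq t2a0 by simp
  \<comment> \<open>(2)\<close>
  have ab: "a k + b k = \<gamma> * t2b k" for k
  proof -
    have "matpow AK (k+1) *v x' = matpow AK (k+2) *v x + matpow AK (k+1) *v v"
      using Mshift[of k x] by (simp add: x'_def matrix_vector_right_distrib)
    then show ?thesis
      by (simp add: a_def b_def t2b_def inner_add_right matrix_vector_right_distrib distrib_left power_add mult_ac)
  qed
  have sb: "summable b"
  proof -
    have "b = (\<lambda>k. \<gamma> * t2b k - a k)" using ab by (auto simp: algebra_simps)
    then show ?thesis using s(4) sa by (simp add: summable_diff summable_mult)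
  qed
  have S2b: "\<gamma> * suminf t2b = suminf a + suminf b"
    using suminf_mult[OF s(4), of \<gamma>] suminf_add[OF sa sb] ab by simp
  \<comment> \<open>(3)\<close>
  have t3s: "(\<lambda>k. t3a (Suc k)) = (\<lambda>k. \<gamma> * t3b k)"
    by (rule ext) (simp add: t3a_def t3b_def w'_def)
  have S3: "suminf t3a = \<gamma> * (v \<bullet> (P *v v)) + \<gamma> * suminf t3b"
    using suminf_split_head[OF s(2)] t3s suminf_mult[OF s(5), of \<gamma>]
    by (simp add: t3a_def w'_def)
  \<comment> \<open>(4)\<close>
  have t4be: "t4a j = b j + e j" for j
  proof -
    have "(\<Sum>\<tau><Suc j. matpow AK (Suc j - \<tau>) *v w' \<tau>)
          = matpow AK (Suc j) *v v + (\<Sum>\<tau><j. matpow AK (j - \<tau>) *v w \<tau>)"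
      by (subst sum.lessThan_Suc_shift) (simp add: w'_def)
    note H = this
    have "t4a j = \<gamma>^(j+2) * (w j \<bullet> (P *v (\<Sum>\<tau><Suc j. matpow AK (Suc j - \<tau>) *v w' \<tau>)))"
      unfolding t4a_def by (simp add: w'_def)
    also have "\<dots> = \<gamma>^(j+2) * (w j \<bullet> (P *v (matpow AK (Suc j) *v v + (\<Sum>\<tau><j. matpow AK (j - \<tau>) *v w \<tau>))))"
      by (simp only: H)
    finally show ?thesis
      by (simp add: b_def e_def inner_add_right matrix_vector_right_distrib distrib_left)
  qed
  have se: "summable e"
  proof -
    have "e = (\<lambda>j. t4a j - b j)" using t4be by (auto simp: algebra_simps)
    then show ?thesis using s(3) sb by (simp add: summable_diff)
  qed
  have e0: "e 0 = 0" by (simp add: e_def)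
  have es: "(\<lambda>j. e (Suc j)) = (\<lambda>j. \<gamma> * t4b j)"
    by (rule ext) (simp add: e_def t4b_def mult_ac)
  have Se: "suminf e = \<gamma> * suminf t4b"
    using suminf_split_head[OF se] es e0 suminf_mult[OF s(6), of \<gamma>] by simp
  have S4: "suminf t4a = suminf b + \<gamma> * suminf t4b"
  proof -
    have "t4a = (\<lambda>n. b n + e n)" using t4be by (rule ext)
    then show ?thesis using suminf_add[OF sb se] Se by simp
  qed
  \<comment> \<open>(5)\<close>
  have Q5: "x \<bullet> (P *v x) + 2 * \<gamma> * (v \<bullet> (P *v (AK *v x))) + \<gamma> * (v \<bullet> (P *v v))
      = x \<bullet> (QK *v x) + \<gamma> * (x' \<bullet> (P *v x'))"
  proof -
    have "x' \<bullet> (P *v x') = (AK *v x) \<bullet> (P *v (AK *v x)) + (AK *v x) \<bullet> (P *v v)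
          + v \<bullet> (P *v (AK *v x)) + v \<bullet> (P *v v)"
      by (simp add: x'_def matrix_vector_right_distrib inner_add_left inner_add_right)
    also have "(AK *v x) \<bullet> (P *v v) = v \<bullet> (P *v (AK *v x))" by (rule symP)
    finally show ?thesis using lyapB[of x] by (simp add: algebra_simps)
  qed
  show ?thesis
    unfolding GKa GKb using S2 S2b S3 S4 Q5 by (simp add: algebra_simps)
qed



lemma summable_lin_geom:
  fixes r :: real assumes r0: "0 \<le> r" and r1: "r < 1"
  shows "summable (\<lambda>n. real (Suc n) * r^n)"
proof (rule summable_ratio_test[where c="(1+r)/2" and N="nat \<lceil>3/(1-r)\<rceil>"])
  show "(1+r)/2 < 1" using r1 by simp
  fix n assume n: "nat \<lceil>3/(1-r)\<rceil> \<le> n"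
  then have "3/(1-r) \<le> real n" by linarith
  then have "3 \<le> real n * (1-r)" using r1 by (simp add: field_simps)
  then have h: "3 \<le> real n - real n * r" by (simp add: algebra_simps)
  have "(real n + 2) * r \<le> (1+r)/2 * (real n + 1)"
    using h r1 by (simp add: algebra_simps)
  then have key: "real (Suc (Suc n)) * r \<le> (1+r)/2 * real (Suc n)"
    by (simp add: add.commute)
  have "real (Suc (Suc n)) * r ^ Suc n = (real (Suc (Suc n)) * r) * r^n" by simp
  also have "\<dots> \<le> ((1+r)/2 * real (Suc n)) * r^n"
    by (rule mult_right_mono[OF key]) (simp add: r0)
  finally show "norm (real (Suc (Suc n)) * r ^ Suc n) \<le> (1 + r) / 2 * norm (real (Suc n) * r ^ n)"
    using r0 by (simp add: abs_mult mult_ac)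
qed

lemma inner_P_bound:
  fixes P :: "real^'n^'n"
  assumes Pb: "\<And>y. norm (P *v y) \<le> cP * norm y"
  shows "\<bar>a \<bullet> (P *v b)\<bar> \<le> cP * (norm a * norm b)"
proof -
  have "\<bar>a \<bullet> (P *v b)\<bar> \<le> norm a * norm (P *v b)" by (rule Cauchy_Schwarz_ineq2)
  also have "\<dots> \<le> norm a * (cP * norm b)" by (rule mult_left_mono[OF Pb]) simp
  finally show ?thesis by (simp add: mult_ac)
qed

lemma ab_le_sq:
  fixes a b :: real assumes "0 \<le> a * b" shows "a * b \<le> a^2 + b^2"
proof -
  have "0 \<le> (a - b)^2" by simp
  also have "(a - b)^2 = a^2 + b^2 - 2 * (a * b)" by (simp add: power2_diff)
  finally show ?thesis using assms by linarith
qed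

lemma GK_summable:
  fixes AK P :: "real^'n^'n" and \<gamma> \<delta> S C cP :: real and w :: "nat \<Rightarrow> real^'n" and y :: "real^'n"
  assumes g0: "0 < \<gamma>" and gd: "\<gamma> < \<delta>" and d1: "\<delta> < 1"
    and C0: "0 \<le> C" and cP0: "0 \<le> cP"
    and Mb: "\<And>k y. norm (matpow AK k *v y) \<le> C * norm y"
    and Pb: "\<And>y. norm (P *v y) \<le> cP * norm y"
    and good: "\<And>k. norm (w k)^2 * \<delta>^k \<le> S"
  shows "summable (\<lambda>k. \<gamma>^(k+1) * (w k \<bullet> (P *v (matpow AK (k+1) *v y))))"
    and "summable (\<lambda>k. \<gamma>^(k+1) * (w k \<bullet> (P *v w k)))"
    and "summable (\<lambda>j. \<gamma>^((j+1)+1) * (w (j+1) \<bullet> (P *v (\<Sum>\<tau><j+1. matpow AK ((j+1) - \<tau>) *v w \<tau>))))"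
proof -
  define r where "r = \<gamma> / \<delta>"
  have d0: "0 < \<delta>" using g0 gd by simp
  have r0: "0 \<le> r" and r1: "r < 1" using g0 gd d0 by (auto simp: r_def)
  have g1: "\<gamma> \<le> 1" using gd d1 by simp
  have wb: "norm (w k)^2 \<le> S / \<delta>^k" for k using good[of k] d0 by (simp add: field_simps)
  have gw2: "\<gamma>^k * norm (w k)^2 \<le> S * r^k" for k
  proof -
    have "\<gamma>^k * norm (w k)^2 \<le> \<gamma>^k * (S / \<delta>^k)" by (rule mult_left_mono[OF wb]) (use g0 in simp)
    also have "\<dots> = S * r^k" by (simp add: r_def power_divide)
    finally show ?thesis .
  qed
  have gw1: "\<gamma>^k * norm (w k) \<le> \<gamma>^k + S * r^k" for k
  proof -
    have "norm (w k) \<le> 1 + norm (w k)^2"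
      using ab_le_sq[of "norm (w k)" 1] by simp
    then have "\<gamma>^k * norm (w k) \<le> \<gamma>^k * (1 + norm (w k)^2)" by (rule mult_left_mono) (use g0 in simp)
    then show ?thesis using gw2[of k] by (simp add: algebra_simps)
  qed
  have S0: "0 \<le> S" using good[of 0] order_trans[OF zero_le_power2[of "norm (w 0)"]] by simp
  have gw4: "\<gamma>^j * norm (w \<tau>)^2 \<le> (S / \<delta>) * r^j" if t: "\<tau> \<le> j + 1" for j \<tau>
  proof -
    have "S / \<delta>^\<tau> \<le> S / \<delta>^(j+1)" using d0 d1 t S0
      by (intro divide_left_mono power_decreasing) auto
    then have "norm (w \<tau>)^2 \<le> S / \<delta>^(j+1)" using wb[of \<tau>] by linarith
    then have "\<gamma>^j * norm (w \<tau>)^2 \<le> \<gamma>^j * (S / \<delta>^(j+1))" by (rule mult_left_mono) (use g0 in simp)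
    also have "\<dots> = (S / \<delta>) * r^j" using d0 by (simp add: r_def power_divide)
    finally show ?thesis .
  qed
  show "summable (\<lambda>k. \<gamma>^(k+1) * (w k \<bullet> (P *v (matpow AK (k+1) *v y))))"
  proof (rule summable_comparison_test')
    show "summable (\<lambda>k. (cP * C * norm y) * (\<gamma>^k + S * r^k))"
      using g0 g1 r0 r1 gd d1 by (intro summable_mult summable_add) (auto intro!: summable_mult)
    fix k
    have "norm (\<gamma>^(k+1) * (w k \<bullet> (P *v (matpow AK (k+1) *v y))))
        = \<gamma>^(k+1) * \<bar>w k \<bullet> (P *v (matpow AK (k+1) *v y))\<bar>" using g0 by (simp add: abs_mult)
    also have "\<dots> \<le> \<gamma>^(k+1) * (cP * (norm (w k) * norm (matpow AK (k+1) *v y)))"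
      by (rule mult_left_mono[OF inner_P_bound[OF Pb]]) (use g0 in simp)
    also have "\<dots> \<le> \<gamma>^(k+1) * (cP * (norm (w k) * (C * norm y)))"
      by (intro mult_left_mono Mb) (use g0 cP0 in auto)
    also have "\<dots> \<le> \<gamma>^k * (cP * (norm (w k) * (C * norm y)))"
      by (intro mult_right_mono) (use g0 g1 cP0 C0 in \<open>auto intro!: power_decreasing\<close>)
    also have "\<dots> = (cP * C * norm y) * (\<gamma>^k * norm (w k))" by (simp add: mult_ac)
    also have "\<dots> \<le> (cP * C * norm y) * (\<gamma>^k + S * r^k)"
      by (intro mult_left_mono gw1) (use cP0 C0 in simp)
    finally show "norm (\<gamma>^(k+1) * (w k \<bullet> (P *v (matpow AK (k+1) *v y)))) \<le> (cP * C * norm y) * (\<gamma>^k + S * r^k)" .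
  qed
  show "summable (\<lambda>k. \<gamma>^(k+1) * (w k \<bullet> (P *v w k)))"
  proof (rule summable_comparison_test')
    show "summable (\<lambda>k. (cP * S) * r^k)"
      using r0 r1 by (intro summable_mult) auto
    fix k
    have "norm (\<gamma>^(k+1) * (w k \<bullet> (P *v w k))) = \<gamma>^(k+1) * \<bar>w k \<bullet> (P *v w k)\<bar>"
      using g0 by (simp add: abs_mult)
    also have "\<dots> \<le> \<gamma>^(k+1) * (cP * (norm (w k) * norm (w k)))"
      by (rule mult_left_mono[OF inner_P_bound[OF Pb]]) (use g0 in simp)
    also have "\<dots> \<le> \<gamma>^k * (cP * (norm (w k) * norm (w k)))"
      by (intro mult_right_mono) (use g0 g1 cP0 in \<open>auto intro!: power_decreasing\<close>)
    also have "\<dots> = cP * (\<gamma>^k * norm (w k)^2)" by (simp add: power2_eq_square mult_ac)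
    also have "\<dots> \<le> cP * (S * r^k)" by (intro mult_left_mono gw2) (use cP0 in simp)
    finally show "norm (\<gamma>^(k+1) * (w k \<bullet> (P *v w k))) \<le> (cP * S) * r^k" by (simp add: mult_ac)
  qed
  show "summable (\<lambda>j. \<gamma>^((j+1)+1) * (w (j+1) \<bullet> (P *v (\<Sum>\<tau><j+1. matpow AK ((j+1) - \<tau>) *v w \<tau>))))"
  proof (rule summable_comparison_test')
    show "summable (\<lambda>j. (cP * C * 2 * (S / \<delta>)) * (real (Suc j) * r^j))"
      using r0 r1 by (intro summable_mult summable_lin_geom)
    fix j
    have nsum: "norm (\<Sum>\<tau><j+1. matpow AK ((j+1) - \<tau>) *v w \<tau>) \<le> (\<Sum>\<tau><j+1. C * norm (w \<tau>))"
      by (rule order_trans[OF norm_sum sum_mono]) (rule Mb)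
    have "norm (\<gamma>^((j+1)+1) * (w (j+1) \<bullet> (P *v (\<Sum>\<tau><j+1. matpow AK ((j+1) - \<tau>) *v w \<tau>))))
        = \<gamma>^((j+1)+1) * \<bar>w (j+1) \<bullet> (P *v (\<Sum>\<tau><j+1. matpow AK ((j+1) - \<tau>) *v w \<tau>))\<bar>"
      using g0 by (simp add: abs_mult)
    also have "\<dots> \<le> \<gamma>^((j+1)+1) * (cP * (norm (w (j+1)) * norm (\<Sum>\<tau><j+1. matpow AK ((j+1) - \<tau>) *v w \<tau>)))"
      by (rule mult_left_mono[OF inner_P_bound[OF Pb]]) (use g0 in simp)
    also have "\<dots> \<le> \<gamma>^j * (cP * (norm (w (j+1)) * (\<Sum>\<tau><j+1. C * norm (w \<tau>))))"
    proof (rule mult_mono)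
      show "\<gamma>^((j+1)+1) \<le> \<gamma>^j" using g0 g1 by (intro power_decreasing) auto
      show "cP * (norm (w (j+1)) * norm (\<Sum>\<tau><j+1. matpow AK ((j+1) - \<tau>) *v w \<tau>))
          \<le> cP * (norm (w (j+1)) * (\<Sum>\<tau><j+1. C * norm (w \<tau>)))"
        by (intro mult_left_mono nsum) (use cP0 in auto)
    qed (use g0 cP0 C0 in \<open>auto intro!: mult_nonneg_nonneg sum_nonneg\<close>)
    also have "\<dots> = cP * C * (\<Sum>\<tau><j+1. \<gamma>^j * (norm (w (j+1)) * norm (w \<tau>)))"
      by (simp add: sum_distrib_left mult_ac del: sum.lessThan_Suc)
    also have "\<dots> \<le> cP * C * (\<Sum>\<tau><j+1. 2 * (S / \<delta>) * r^j)"
    proof (intro mult_left_mono sum_mono)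
      fix \<tau> assume "\<tau> \<in> {..<j+1}"
      then have t: "\<tau> \<le> j + 1" by simp
      have ab: "norm (w (j+1)) * norm (w \<tau>) \<le> norm (w (j+1))^2 + norm (w \<tau>)^2"
        by (rule ab_le_sq) simp
      have "\<gamma>^j * (norm (w (j+1)) * norm (w \<tau>)) \<le> \<gamma>^j * (norm (w (j+1))^2 + norm (w \<tau>)^2)"
        by (rule mult_left_mono[OF ab]) (use g0 in simp)
      also have "\<dots> = \<gamma>^j * norm (w (j+1))^2 + \<gamma>^j * norm (w \<tau>)^2" by (simp add: algebra_simps)
      also have "\<dots> \<le> (S / \<delta>) * r^j + (S / \<delta>) * r^j"
        by (intro add_mono gw4) (use t in auto)
      finally show "\<gamma>^j * (norm (w (j+1)) * norm (w \<tau>)) \<le> 2 * (S / \<delta>) * r^j" by simp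
    qed (use cP0 C0 in auto)
    also have "\<dots> = (cP * C * 2 * (S / \<delta>)) * (real (Suc j) * r^j)" by (simp add: mult_ac)
    finally show "norm (\<gamma>^((j+1)+1) * (w (j+1) \<bullet> (P *v (\<Sum>\<tau><j+1. matpow AK ((j+1) - \<tau>) *v w \<tau>))))
        \<le> (cP * C * 2 * (S / \<delta>)) * (real (Suc j) * r^j)" .
  qed
qed



lemma GK_measurable:
  fixes f :: "'a \<Rightarrow> real^'n" and g :: "'a \<Rightarrow> nat \<Rightarrow> real^'n"
  assumes f: "f \<in> borel_measurable M" and g: "\<And>k. (\<lambda>x. g x k) \<in> borel_measurable M"
  shows "(\<lambda>x. GK P AK \<gamma> (f x) (g x)) \<in> borel_measurable M"
proof -
  have mv[measurable]: "(\<lambda>x. X *v h x) \<in> borel_measurable M" if "h \<in> borel_measurable M" for X :: "real^'n^'n" and h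
  proof -
    have "(\<lambda>y. X *v y) \<in> borel_measurable borel"
      by (intro borel_measurable_continuous_onI linear_continuous_on matrix_vector_mul_bounded_linear)
    then show ?thesis using measurable_compose[OF that] by blast
  qed
  note [measurable] = f g
  show ?thesis unfolding GK_def by measurable
qed



lemma mv_bound:
  fixes X :: "real^'n^'m" assumes X: "\<And>i j. \<bar>X$i$j\<bar> \<le> c"
  shows "norm (X *v y) \<le> (real CARD('m) * real CARD('n) * c) * norm y"
proof -
  have c0: "0 \<le> c" using X order_trans[OF abs_ge_zero] by blast
  have "norm (X *v y) \<le> (\<Sum>i\<in>UNIV. \<bar>(X *v y)$i\<bar>)" by (rule norm_le_l1_cart)
  also have "\<dots> \<le> (\<Sum>i\<in>(UNIV::'m set). real CARD('n) * c * norm y)"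
  proof (rule sum_mono)
    fix i
    have "\<bar>(X *v y)$i\<bar> = \<bar>\<Sum>j\<in>UNIV. X$i$j * y$j\<bar>" by (simp add: matrix_vector_mult_def)
    also have "\<dots> \<le> (\<Sum>j\<in>UNIV. \<bar>X$i$j * y$j\<bar>)" by (rule sum_abs)
    also have "\<dots> \<le> (\<Sum>j\<in>(UNIV::'n set). c * norm y)"
    proof (rule sum_mono)
      fix j
      show "\<bar>X$i$j * y$j\<bar> \<le> c * norm y"
        unfolding abs_mult by (rule mult_mono[OF X component_le_norm_cart c0 abs_ge_zero])
    qed
    also have "\<dots> = real CARD('n) * c * norm y" by simp
    finally show "\<bar>(X *v y)$i\<bar> \<le> real CARD('n) * c * norm y" .
  qed
  also have "\<dots> = (real CARD('m) * real CARD('n) * c) * norm y" by simp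
  finally show ?thesis .
qed

lemma lin_bound: "\<exists>c\<ge>0. \<forall>y. norm ((P::real^'n^'m) *v y) \<le> c * norm y"
proof -
  obtain K where "K \<ge> 0" "\<And>x. norm (P *v x) \<le> norm x * K"
    using bounded_linear.nonneg_bounded[OF matrix_vector_mul_bounded_linear[of P]] by blast
  then show ?thesis by (metis mult.commute)
qed

lemma zero_by_geom:
  fixes a c \<gamma> :: real assumes "0 \<le> \<gamma>" "\<gamma> < 1" "\<And>k. \<bar>a\<bar> \<le> c * \<gamma>^k"
  shows "a = 0"
proof -
  have "(\<lambda>k. c * \<gamma>^k) \<longlonglongrightarrow> 0"
    by (intro tendsto_mult_right_zero LIMSEQ_power_zero) (use assms in simp)
  then have "\<bar>a\<bar> \<le> 0" using LIMSEQ_le_const[of "\<lambda>k. c * \<gamma>^k" 0 "\<bar>a\<bar>"] assms(3) by blast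
  then show ?thesis by simp
qed

lemma inner_transpose: "(y::real^'n) \<bullet> (transpose A *v u) = (A *v y) \<bullet> u"
proof -
  have "y \<bullet> (transpose A *v u) = (u v* A) \<bullet> y" by (simp add: inner_commute)
  also have "\<dots> = u \<bullet> (A *v y)" by (rule dot_lmul_matrix)
  also have "\<dots> = (A *v y) \<bullet> u" by (rule inner_commute)
  finally show ?thesis .
qed

lemma transpose_add': "transpose (A + B) = transpose A + transpose B"
  by (simp add: transpose_def Finite_Cartesian_Product.vec_eq_iff)

lemma lyap_bilin:
  fixes P QK AK :: "real^'n^'n"
  assumes lyap: "P = QK + \<gamma> *\<^sub>R (transpose AK ** P ** AK)"
  shows "y \<bullet> (P *v z) = y \<bullet> (QK *v z) + \<gamma> * ((AK *v y) \<bullet> (P *v (AK *v z)))"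
proof -
  have "P *v z = (QK + \<gamma> *\<^sub>R (transpose AK ** P ** AK)) *v z"
    by (rule arg_cong[where f="\<lambda>X. X *v z"], rule lyap)
  also have "\<dots> = QK *v z + \<gamma> *\<^sub>R (transpose AK *v (P *v (AK *v z)))"
    by (simp only: matrix_vector_mult_add_rdistrib scaleR_matrix_vector_assoc[symmetric] matrix_vector_mul_assoc matrix_mul_assoc)
  finally have "P *v z = QK *v z + \<gamma> *\<^sub>R (transpose AK *v (P *v (AK *v z)))" .
  then show ?thesis by (simp only: inner_add_right inner_scaleR_right inner_transpose)
qed

lemma stable_op_bound:
  fixes M :: "real^'n^'n" assumes "\<exists>c. \<forall>k i j. \<bar>matpow M k $ i $ j\<bar> \<le> c"
  shows "\<exists>C\<ge>0. \<forall>k y. norm (matpow M k *v y) \<le> C * norm y"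
proof -
  obtain c where c: "\<And>k i j. \<bar>matpow M k $ i $ j\<bar> \<le> c" using assms by blast
  have c0: "0 \<le> c" using c[of 0] order_trans[OF abs_ge_zero] by blast
  show ?thesis
    by (rule exI[of _ "real CARD('n) * real CARD('n) * c"]) (use c0 mv_bound[OF c] in auto)
qed



theorem theorem1:
  fixes A :: "real^'n^'n" and B :: "real^'p^'n" and K :: "real^'n^'p"
    and Q :: "real^'n^'n" and R :: "real^'p^'p" and P :: "real^'n^'n"
    and \<gamma> :: real and D :: "(real^'n) measure" and x :: "real^'n"
  assumes D_prob: "prob_space D" and D_borel: "sets D = sets borel"
    and D_moments: "\<And>m::nat. integrable D (\<lambda>v. norm v ^ m)"
    and Q_pd: "pos_def Q" and R_pd: "pos_def R"
    and \<gamma>_pos: "0 < \<gamma>" and \<gamma>_lt1: "\<gamma> < 1"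
    and stab: "stable (A + B ** K)"
    and lyap: "P = Q + transpose K ** R ** K
                   + \<gamma> *\<^sub>R (transpose (A + B ** K) ** P ** (A + B ** K))"
  shows "distr (PiM UNIV (\<lambda>_::nat. D)) borel (GK P (A + B ** K) \<gamma> x)
       = distr (D \<Otimes>\<^sub>M PiM UNIV (\<lambda>_::nat. D)) borel
           (\<lambda>(v, w). x \<bullet> ((Q + transpose K ** R ** K) *v x)
                     + \<gamma> * GK P (A + B ** K) \<gamma> ((A + B ** K) *v x + v) w)"
proof -
  define AK where "AK = A + B ** K"
  define QK where "QK = Q + transpose K ** R ** K"
  define \<delta> where "\<delta> = (1 + \<gamma>) / 2"
  define Pi where "Pi = PiM UNIV (\<lambda>_::nat. D)"
  have gd: "\<gamma> < \<delta>" and d1: "\<delta> < 1" and d0: "0 < \<delta>" using \<gamma>_pos \<gamma>_lt1 by (auto simp: \<delta>_def)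
  obtain C where C0: "0 \<le> C" and Mb: "\<And>k y. norm (matpow AK k *v y) \<le> C * norm y"
    using stable_op_bound[OF stable_pow_bounded[OF stab[folded AK_def]]] by blast
  obtain cP where cP0: "0 \<le> cP" and Pb: "\<And>y. norm (P *v y) \<le> cP * norm y"
    using lin_bound[of P] by blast
  have lyapB: "y \<bullet> (P *v z) = y \<bullet> (QK *v z) + \<gamma> * ((AK *v y) \<bullet> (P *v (AK *v z)))" for y z
    by (rule lyap_bilin) (use lyap in \<open>simp add: AK_def QK_def\<close>)
  have QKt: "transpose QK = QK"
    using Q_pd R_pd by (simp add: QK_def pos_def_def transpose_add' matrix_transpose_mul matrix_mul_assoc)
  have QKsym: "y \<bullet> (QK *v z) = z \<bullet> (QK *v y)" for y z
  proof -
    have "y \<bullet> (QK *v z) = y \<bullet> (transpose QK *v z)" by (simp only: QKt)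
    also have "\<dots> = (QK *v y) \<bullet> z" by (rule inner_transpose)
    finally show ?thesis by (simp add: inner_commute)
  qed
  have symP: "y \<bullet> (P *v z) = z \<bullet> (P *v y)" for y z
  proof -
    define f where "f = (\<lambda>y z. y \<bullet> (P *v z) - z \<bullet> (P *v y))"
    have step: "f y z = \<gamma> * f (AK *v y) (AK *v z)" for y z
      using lyapB[of y z] lyapB[of z y] QKsym[of y z] by (simp add: f_def algebra_simps)
    have iter: "f y z = \<gamma>^k * f (matpow AK k *v y) (matpow AK k *v z)" for k
    proof (induction k arbitrary: y z)
      case 0 then show ?case by (simp add: matrix_vector_mul_lid)
    next
      case (Suc k)
      have e: "matpow AK k *v (AK *v u) = matpow AK (Suc k) *v u" for u
        by (simp only: matpow_Suc' matrix_vector_mul_assoc)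
      show ?case using step[of y z] Suc[of "AK *v y" "AK *v z"] by (simp add: e)
    qed
    have "\<bar>f y z\<bar> \<le> (2 * cP * (C * norm y) * (C * norm z)) * \<gamma>^k" for k
    proof -
      let ?u = "matpow AK k *v y" and ?u' = "matpow AK k *v z"
      have "\<bar>f ?u ?u'\<bar> \<le> \<bar>?u \<bullet> (P *v ?u')\<bar> + \<bar>?u' \<bullet> (P *v ?u)\<bar>" by (simp add: f_def)
      also have "\<dots> \<le> cP * (norm ?u * norm ?u') + cP * (norm ?u' * norm ?u)"
        by (intro add_mono inner_P_bound[OF Pb])
      also have "\<dots> = 2 * cP * norm ?u * norm ?u'" by (simp add: algebra_simps)
      also have "\<dots> \<le> 2 * cP * (C * norm y) * (C * norm z)"
        by (intro mult_mono Mb) (use cP0 C0 in auto)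
      finally have "\<bar>f ?u ?u'\<bar> \<le> 2 * cP * (C * norm y) * (C * norm z)" .
      then have "\<gamma>^k * \<bar>f ?u ?u'\<bar> \<le> \<gamma>^k * (2 * cP * (C * norm y) * (C * norm z))"
        by (rule mult_left_mono) (use \<gamma>_pos in simp)
      then show ?thesis using iter[of k] \<gamma>_pos by (simp add: abs_mult mult_ac)
    qed
    then have "f y z = 0" by (intro zero_by_geom[of \<gamma>]) (use \<gamma>_pos \<gamma>_lt1 in auto)
    then show ?thesis by (simp add: f_def)
  qed
  \<comment> \<open>pointwise Bellman identity on good sequences\<close>
  have pointwise: "GK P AK \<gamma> x (case_nat v w) = x \<bullet> (QK *v x) + \<gamma> * GK P AK \<gamma> (AK *v x + v) w"
    if S: "\<And>k. norm (w k)^2 * \<delta>^k \<le> S" for v w S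
  proof -
    have S0: "0 \<le> S" using S[of 0] order_trans[OF zero_le_power2[of "norm (w 0)"]] by simp
    have S': "norm (case_nat v w k)^2 * \<delta>^k \<le> max (norm v ^ 2) S" for k
    proof (cases k)
      case 0 then show ?thesis by simp
    next
      case (Suc j)
      have "norm (w j)^2 * \<delta>^(Suc j) = \<delta> * (norm (w j)^2 * \<delta>^j)" by simp
      also have "\<dots> \<le> 1 * S" by (intro mult_mono S) (use d0 d1 S0 in auto)
      finally show ?thesis using Suc by simp
    qed
    note sa = GK_summable(1)[OF \<gamma>_pos gd d1 C0 cP0 Mb Pb S', of x]
       GK_summable(2,3)[OF \<gamma>_pos gd d1 C0 cP0 Mb Pb S']
    note sb = GK_summable(1)[OF \<gamma>_pos gd d1 C0 cP0 Mb Pb S, of "AK *v x + v"]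
       GK_summable(2,3)[OF \<gamma>_pos gd d1 C0 cP0 Mb Pb S]
    show ?thesis by (rule GK_shift[OF symP lyapB sa sb])
  qed
  \<comment> \<open>measure theory\<close>
  interpret S: sequence_space D
    unfolding sequence_space_def by (rule product_prob_spaceI) (rule D_prob)
  interpret PP: pair_prob_space D Pi
    unfolding Pi_def pair_prob_space_def pair_sigma_finite_def
    using D_prob S.P.prob_space_axioms by (auto intro: prob_space_imp_sigma_finite)
  have comp[measurable]: "(\<lambda>w. w k) \<in> borel_measurable Pi" for k
  proof -
    have "(\<lambda>w. w k) \<in> measurable Pi D" unfolding Pi_def by (rule measurable_component_singleton) simp
    then show ?thesis by (subst measurable_cong_sets[OF refl D_borel, symmetric])
  qed
  have idD[measurable]: "(\<lambda>v. v) \<in> borel_measurable D"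
    using measurable_ident_sets[OF D_borel] .
  define F where "F w = (\<Sum>k. ennreal (norm (w k)^2 * \<delta>^k))" for w :: "nat \<Rightarrow> real^'n"
  have F_meas[measurable]: "F \<in> borel_measurable Pi" unfolding F_def by measurable
  have I_fin: "(\<integral>\<^sup>+v. ennreal (norm v ^ 2) \<partial>D) < \<infinity>"
    using D_moments[of 2] unfolding integrable_iff_bounded by simp
  have int_k: "(\<integral>\<^sup>+w. ennreal (norm (w k)^2 * \<delta>^k) \<partial>Pi) = ennreal (\<delta>^k) * (\<integral>\<^sup>+v. ennreal (norm v ^ 2) \<partial>D)" for k
  proof -
    have "(\<integral>\<^sup>+w. ennreal (norm (w k)^2 * \<delta>^k) \<partial>Pi) = (\<integral>\<^sup>+w. ennreal (\<delta>^k) * ennreal (norm (w k)^2) \<partial>Pi)"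
      using d0 by (simp add: ennreal_mult mult.commute)
    also have "\<dots> = ennreal (\<delta>^k) * (\<integral>\<^sup>+w. ennreal (norm (w k)^2) \<partial>Pi)"
      by (rule nn_integral_cmult) measurable
    also have "(\<integral>\<^sup>+w. ennreal (norm (w k)^2) \<partial>Pi) = (\<integral>\<^sup>+v. ennreal (norm v^2) \<partial>distr Pi D (\<lambda>w. w k))"
      by (rule nn_integral_distr[symmetric]) (auto simp: Pi_def measurable_cong_sets[OF refl D_borel])
    also have "distr Pi D (\<lambda>w. w k) = D"
      unfolding Pi_def by (rule distr_PiM_component) (auto simp: D_prob)
    finally show ?thesis .
  qed
  have "integral\<^sup>N Pi F = (\<Sum>k. ennreal (\<delta>^k) * (\<integral>\<^sup>+v. ennreal (norm v ^ 2) \<partial>D))"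
    unfolding F_def by (subst nn_integral_suminf) (auto simp: int_k)
  also have "\<dots> = ennreal (\<Sum>k. \<delta>^k) * (\<integral>\<^sup>+v. ennreal (norm v ^ 2) \<partial>D)"
    using d0 d1 by (simp add: suminf_ennreal2)
  finally have "integral\<^sup>N Pi F \<noteq> \<infinity>" using I_fin by (simp add: ennreal_mult_eq_top_iff)
  then have AEF: "AE w in Pi. F w \<noteq> \<infinity>" by (intro nn_integral_PInf_AE) simp
  have good: "norm (w k)^2 * \<delta>^k \<le> (\<Sum>k. norm (w k)^2 * \<delta>^k)" if "F w \<noteq> \<infinity>" for w k
  proof -
    have sm: "summable (\<lambda>k. norm (w k)^2 * \<delta>^k)"
      using that d0 by (intro summable_suminf_not_top) (auto simp: F_def)
    show ?thesis using sum_le_suminf[OF sm, of "{k}"] d0 by auto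
  qed
  have AEprod: "AE p in D \<Otimes>\<^sub>M Pi. F (snd p) \<noteq> \<infinity>"
    by (rule PP.AE_pair_measure) (use AEF in auto)
  have ae_eq: "AE p in D \<Otimes>\<^sub>M Pi. (\<lambda>(v, w). x \<bullet> (QK *v x) + \<gamma> * GK P AK \<gamma> (AK *v x + v) w) p
                   = GK P AK \<gamma> x ((\<lambda>(v, w). case_nat v w) p)"
    using AEprod by eventually_elim (auto simp: pointwise[OF good])
  have m1: "(\<lambda>(v, w). x \<bullet> (QK *v x) + \<gamma> * GK P AK \<gamma> (AK *v x + v) w) \<in> borel_measurable (D \<Otimes>\<^sub>M Pi)"
  proof -
    have "(\<lambda>p. GK P AK \<gamma> (AK *v x + fst p) (snd p)) \<in> borel_measurable (D \<Otimes>\<^sub>M Pi)"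
      by (rule GK_measurable) measurable
    then show ?thesis by (simp add: case_prod_beta')
  qed
  have mG: "(\<lambda>w. GK P AK \<gamma> x w) \<in> borel_measurable Pi"
    by (rule GK_measurable) measurable
  have mc: "(\<lambda>(v, w). case_nat v w) \<in> measurable (D \<Otimes>\<^sub>M Pi) Pi"
    unfolding Pi_def by measurable
  have "distr (D \<Otimes>\<^sub>M Pi) borel (\<lambda>(v, w). x \<bullet> (QK *v x) + \<gamma> * GK P AK \<gamma> (AK *v x + v) w)
      = distr (D \<Otimes>\<^sub>M Pi) borel (GK P AK \<gamma> x \<circ> (\<lambda>(v, w). case_nat v w))"
    by (rule distr_cong_AE[OF refl refl]) (use ae_eq m1 measurable_comp[OF mc mG] in \<open>auto simp: comp_def\<close>)
  also have "\<dots> = distr (distr (D \<Otimes>\<^sub>M Pi) Pi (\<lambda>(v, w). case_nat v w)) borel (GK P AK \<gamma> x)"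
    by (rule distr_distr[symmetric, OF mG mc])
  also have "distr (D \<Otimes>\<^sub>M Pi) Pi (\<lambda>(v, w). case_nat v w) = Pi"
    unfolding Pi_def by (rule S.PiM_iter)
  finally show ?thesis unfolding AK_def QK_def Pi_def by simp
qed

end
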